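(* Let $n\in\mathbb{N}$, $\mathcal{P}_n,\mathcal{E}_n\subseteq\mathcal{D}(\mathcal{H}^{\otimes n})$, and $r>0$. Then $\overline{\zeta}_{\mathrm{GPO},r}(\mathcal{P}_n,\mathcal{E}_n)=\alpha_{n,r}(\mathcal{P}_n\|\mathcal{E}_n)$.
   Context: $\mathcal{H}$ is finite-dimensional; $\mathcal{D}$ denotes density operators; $T(X,Y)=\tfrac12\|X-Y\|_1$. Battery: qubit with basis $\{|0\rangle,|1\rangle\}$, $\pi_M=(1-\tfrac1M)|0\rangle\langle0|+\tfrac1M|1\rangle\langle1|$, $\Pi_M=\{\pi_{M'}:M'\in[M,\infty)\}$. The optimal error of dirty-battery work extraction at rate $r$ is $\overline{\zeta}_{\mathrm{GPO},r}(\mathcal{P}_n,\mathcal{E}_n)=\inf\{\varepsilon\in[0,1]:\exists\text{ CPTP }\mathcal{F}_n\text{ with }T(\mathcal{F}_n(\rho),|1\rangle\langle1|)\le\varepsilon\ \forall\rho\in\mathcal{P}_n\text{ and }\mathcal{F}_n(\tau)\in\Pi_{2^{nr}}\ \forall\tau\in\mathcal{E}_n\}$. The optimal type-I error is $\alpha_{n,r}(\mathcal{P}_n\|\mathcal{E}_n)=\inf\{\sup_{\rho\in\mathcal{P}_n}\operatorname{tr}[(I-E)\rho]:0\le E\le I,\ \sup_{\tau\in\mathcal{E}_n}\operatorname{tr}[E\tau]\le2^{-nr}\}$. *)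

theory Defs
  imports Complex_Main "Jordan_Normal_Form.Matrix"
begin

definition mtrace :: "complex mat \<Rightarrow> complex" where
  "mtrace A = (\<Sum>i<dim_row A. A $$ (i,i))"

definition dagger :: "complex mat \<Rightarrow> complex mat" where
  "dagger A = mat (dim_col A) (dim_row A) (\<lambda>(i,j). cnj (A $$ (j,i)))"

definition hermitian :: "complex mat \<Rightarrow> bool" where
  "hermitian A \<longleftrightarrow> dim_row A = dim_col A \<and> dagger A = A"

definition psd :: "complex mat \<Rightarrow> bool" where
  "psd A \<longleftrightarrow> hermitian A \<and>
     (\<forall>v \<in> carrier_vec (dim_row A).
        Im (conjugate v \<bullet> (A *\<^sub>v v)) = 0 \<and> Re (conjugate v \<bullet> (A *\<^sub>v v)) \<ge> 0)"

definition density_ops :: "nat \<Rightarrow> complex mat set" where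
  "density_ops N = {\<rho> \<in> carrier_mat N N. psd \<rho> \<and> mtrace \<rho> = 1}"

definition psd_sqrt :: "complex mat \<Rightarrow> complex mat" where
  "psd_sqrt A = (THE B. B \<in> carrier_mat (dim_row A) (dim_row A) \<and> psd B \<and> B * B = A)"

definition trace_norm :: "complex mat \<Rightarrow> real" where
  "trace_norm A = Re (mtrace (psd_sqrt (dagger A * A)))"

definition trace_dist :: "complex mat \<Rightarrow> complex mat \<Rightarrow> real" where
  "trace_dist X Y = trace_norm (X - Y) / 2"

definition block :: "nat \<Rightarrow> complex mat \<Rightarrow> nat \<Rightarrow> nat \<Rightarrow> complex mat" where
  "block N X i j = mat N N (\<lambda>(a,b). X $$ (i*N + a, j*N + b))"

text \<open>The map \<open>id\<^sub>k \<otimes> F\<close>, where F maps N x N matrices to M x M matrices.\<close>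
definition id_tensor :: "nat \<Rightarrow> nat \<Rightarrow> nat \<Rightarrow> (complex mat \<Rightarrow> complex mat) \<Rightarrow> complex mat \<Rightarrow> complex mat" where
  "id_tensor k N M F X = mat (k*M) (k*M)
     (\<lambda>(p,q). F (block N X (p div M) (q div M)) $$ (p mod M, q mod M))"

definition cptp :: "nat \<Rightarrow> nat \<Rightarrow> (complex mat \<Rightarrow> complex mat) \<Rightarrow> bool" where
  "cptp N M F \<longleftrightarrow>
     (\<forall>X \<in> carrier_mat N N. F X \<in> carrier_mat M M) \<and>
     (\<forall>X \<in> carrier_mat N N. \<forall>Y \<in> carrier_mat N N. \<forall>c::complex.
         F (c \<cdot>\<^sub>m X + Y) = c \<cdot>\<^sub>m F X + F Y) \<and>
     (\<forall>X \<in> carrier_mat N N. mtrace (F X) = mtrace X) \<and>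
     (\<forall>k. \<forall>X \<in> carrier_mat (k*N) (k*N). psd X \<longrightarrow> psd (id_tensor k N M F X))"

definition ket1bra :: "complex mat" where
  "ket1bra = mat 2 2 (\<lambda>(i,j). if i = 1 \<and> j = 1 then 1 else 0)"

definition battery_state :: "real \<Rightarrow> complex mat" where
  "battery_state M = mat 2 2 (\<lambda>(i,j).
      if i = 0 \<and> j = 0 then complex_of_real (1 - 1/M)
      else if i = 1 \<and> j = 1 then complex_of_real (1/M) else 0)"

definition battery_set :: "real \<Rightarrow> complex mat set" where
  "battery_set M = {battery_state M' | M'. M' \<ge> M}"

definition rsup :: "real set \<Rightarrow> real" where
  "rsup S = (if S = {} then 0 else Sup S)"

definition zeta_GPO :: "nat \<Rightarrow> nat \<Rightarrow> real \<Rightarrow> complex mat set \<Rightarrow> complex mat set \<Rightarrow> real" where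
  "zeta_GPO N n r P E = Inf {\<epsilon> \<in> {0..1}. \<exists>F. cptp N 2 F \<and>
      (\<forall>\<rho> \<in> P. trace_dist (F \<rho>) ket1bra \<le> \<epsilon>) \<and>
      (\<forall>\<tau> \<in> E. F \<tau> \<in> battery_set (2 powr (real n * r)))}"

definition alpha_err :: "nat \<Rightarrow> nat \<Rightarrow> real \<Rightarrow> complex mat set \<Rightarrow> complex mat set \<Rightarrow> real" where
  "alpha_err N n r P E = Inf {rsup ((\<lambda>\<rho>. Re (mtrace ((1\<^sub>m N - T) * \<rho>))) ` P) | T.
      T \<in> carrier_mat N N \<and> psd T \<and> psd (1\<^sub>m N - T) \<and>
      rsup ((\<lambda>\<tau>. Re (mtrace (T * \<tau>))) ` E) \<le> 2 powr (- (real n * r))}"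

end

theory Submission
  imports Defs
begin


lemma sum_split_mult:
  fixes f :: "nat \<Rightarrow> 'a::comm_monoid_add"
  shows "(\<Sum>p<k*N. f p) = (\<Sum>i<k. \<Sum>d<N. f (i*N+d))"
proof -
  have "(\<Sum>p<k*N. f p) = (\<Sum>i<k. sum f {i*N..<i*N+N})"
    using sum.nat_group[of f N k] by simp
  also have "\<dots> = (\<Sum>i<k. \<Sum>d<N. f (i*N+d))"
  proof (rule sum.cong[OF refl])
    fix i show "sum f {i*N..<i*N+N} = (\<Sum>d<N. f (i*N+d))"
      using sum.atLeastLessThan_shift_0[of f "i*N" "i*N+N"]
      by (simp add: atLeast0LessThan comp_def)
  qed
  finally show ?thesis .
qed

definition qf :: "nat \<Rightarrow> complex mat \<Rightarrow> (nat \<Rightarrow> complex) \<Rightarrow> complex" where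
  "qf n A v = (\<Sum>i<n. \<Sum>j<n. cnj (v i) * A $$ (i,j) * v j)"

definition tp :: "nat \<Rightarrow> complex mat \<Rightarrow> complex mat \<Rightarrow> complex" where
  "tp n A X = (\<Sum>i<n. \<Sum>j<n. A $$ (i,j) * X $$ (j,i))"

definition herm :: "nat \<Rightarrow> complex mat \<Rightarrow> bool" where
  "herm n A \<longleftrightarrow> (\<forall>i<n. \<forall>j<n. A $$ (j,i) = cnj (A $$ (i,j)))"

definition posq :: "nat \<Rightarrow> complex mat \<Rightarrow> bool" where
  "posq n A \<longleftrightarrow> (\<forall>v. Im (qf n A v) = 0 \<and> Re (qf n A v) \<ge> 0)"

lemma hermitian_iff: assumes "A \<in> carrier_mat n n"
  shows "hermitian A \<longleftrightarrow> herm n A"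
proof
  assume "hermitian A"
  then have "dagger A = A" by (simp add: hermitian_def)
  then show "herm n A" unfolding herm_def
  proof (intro allI impI)
    fix i j assume ij: "i < n" "j < n"
    have "A $$ (j,i) = dagger A $$ (j,i)" using \<open>dagger A = A\<close> by simp
    also have "\<dots> = cnj (A $$ (i,j))" using assms ij by (simp add: dagger_def)
    finally show "A $$ (j,i) = cnj (A $$ (i,j))" .
  qed
next
  assume h: "herm n A"
  have "dagger A = A"
  proof (rule eq_matI)
    show "dim_row (dagger A) = dim_row A" "dim_col (dagger A) = dim_col A"
      using assms by (auto simp: dagger_def)
    fix i j assume ij: "i < dim_row A" "j < dim_col A"
    then have "i < n" "j < n" using assms by auto
    have "A $$ (i,j) = cnj (A $$ (j,i))" using h \<open>i < n\<close> \<open>j < n\<close> unfolding herm_def by blast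
    then show "dagger A $$ (i,j) = A $$ (i,j)"
      using assms ij unfolding dagger_def by simp
  qed
  then show "hermitian A" using assms by (simp add: hermitian_def)
qed

lemma qf_vec: fixes v :: "nat \<Rightarrow> complex" assumes "A \<in> carrier_mat n n"
  shows "conjugate (vec n v) \<bullet> (A *\<^sub>v vec n v) = qf n A v"
proof -
  have r: "row A i \<bullet> vec n v = (\<Sum>j<n. A $$ (i,j) * v j)" if "i < n" for i
    using assms that by (simp add: scalar_prod_def atLeast0LessThan)
  show ?thesis unfolding qf_def scalar_prod_def
    using assms by (simp add: r atLeast0LessThan sum_distrib_left mult.assoc)
qed

lemma psd_iff: assumes "A \<in> carrier_mat n n"
  shows "psd A \<longleftrightarrow> herm n A \<and> posq n A"
proof
  assume p: "psd A"
  have "posq n A" unfolding posq_def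
  proof
    fix v :: "nat \<Rightarrow> complex"
    have "vec n v \<in> carrier_vec (dim_row A)" using assms by auto
    with p show "Im (qf n A v) = 0 \<and> Re (qf n A v) \<ge> 0"
      unfolding psd_def using qf_vec[OF assms] by metis
  qed
  with p show "herm n A \<and> posq n A" using hermitian_iff[OF assms] psd_def by auto
next
  assume h: "herm n A \<and> posq n A"
  show "psd A" unfolding psd_def
  proof (intro conjI ballI)
    show "hermitian A" using h hermitian_iff[OF assms] by auto
    fix v :: "complex vec" assume v: "v \<in> carrier_vec (dim_row A)"
    then have "v = vec n (\<lambda>i. v $ i)" using assms by auto
    then have e: "conjugate v \<bullet> (A *\<^sub>v v) = qf n A (\<lambda>i. v $ i)" using qf_vec[OF assms] by metis
    show "Im (conjugate v \<bullet> (A *\<^sub>v v)) = 0" "Re (conjugate v \<bullet> (A *\<^sub>v v)) \<ge> 0"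
      using h unfolding e posq_def by auto
  qed
qed

lemma mtrace_mult: assumes "A \<in> carrier_mat n n" "X \<in> carrier_mat n n"
  shows "mtrace (A * X) = tp n A X"
  using assms by (simp add: mtrace_def tp_def scalar_prod_def atLeast0LessThan)

lemma qf_add_delta:
  assumes k: "k < n"
  shows "qf n A (\<lambda>i. v i + (if i = k then t else 0)) =
    qf n A v + cnj t * (\<Sum>j<n. A $$ (k,j) * v j) + t * (\<Sum>i<n. cnj (v i) * A $$ (i,k))
     + cnj t * A $$ (k,k) * t"
proof -
  have e: "cnj (v i + (if i = k then t else 0)) * A $$ (i,j) * (v j + (if j = k then t else 0))
     = cnj (v i) * A $$ (i,j) * v j + (if i = k then cnj t * A $$ (k,j) * v j else 0)
       + (if j = k then t * (cnj (v i) * A $$ (i,k)) else 0)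
       + (if i = k \<and> j = k then cnj t * A $$ (k,k) * t else 0)" for i j
    by (auto simp: algebra_simps)
  have s2: "(\<Sum>i<n. \<Sum>j<n. (if i = k then cnj t * A $$ (k,j) * v j else 0)) = cnj t * (\<Sum>j<n. A $$ (k,j) * v j)"
  proof -
    have "(\<Sum>i<n. \<Sum>j<n. (if i = k then cnj t * A $$ (k,j) * v j else 0)) =
          (\<Sum>i<n. if i = k then (\<Sum>j<n. cnj t * A $$ (k,j) * v j) else 0)"
      by (rule sum.cong) auto
    also have "\<dots> = (\<Sum>j<n. cnj t * A $$ (k,j) * v j)" using k by simp
    finally show ?thesis by (simp add: sum_distrib_left mult.assoc)
  qed
  have s3: "(\<Sum>i<n. \<Sum>j<n. (if j = k then t * (cnj (v i) * A $$ (i,k)) else 0)) = t * (\<Sum>i<n. cnj (v i) * A $$ (i,k))"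
  proof -
    have "(\<Sum>i<n. \<Sum>j<n. (if j = k then t * (cnj (v i) * A $$ (i,k)) else 0)) =
          (\<Sum>i<n. t * (cnj (v i) * A $$ (i,k)))"
      using k by (intro sum.cong refl) simp
    then show ?thesis by (simp add: sum_distrib_left)
  qed
  have s4: "(\<Sum>i<n. \<Sum>j<n. (if i = k \<and> j = k then cnj t * A $$ (k,k) * t else 0)) = cnj t * A $$ (k,k) * t"
  proof -
    have "(\<Sum>i<n. \<Sum>j<n. (if i = k \<and> j = k then cnj t * A $$ (k,k) * t else 0)) =
          (\<Sum>i<n. if i = k then cnj t * A $$ (k,k) * t else 0)"
      using k by (intro sum.cong refl) (auto simp: sum.delta)
    also have "\<dots> = cnj t * A $$ (k,k) * t" using k by simp
    finally show ?thesis .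
  qed
  show ?thesis unfolding qf_def e sum.distrib s2 s3 s4 by simp
qed


lemma qf_zero[simp]: "qf n A (\<lambda>i. 0) = 0"
  by (simp add: qf_def)

lemma qf_unit:
  assumes "k < n"
  shows "qf n A (\<lambda>i. if i = k then t else 0) = cnj t * A $$ (k,k) * t"
  using qf_add_delta[OF assms, of A "\<lambda>i. 0" t] by simp

lemma qf_two:
  assumes "a < n" "b < n" "a \<noteq> b"
  shows "qf n A (\<lambda>i. (if i = a then x else 0) + (if i = b then y else 0)) =
     cnj x * A $$ (a,a) * x + cnj y * A $$ (b,a) * x + y * cnj x * A $$ (a,b) + cnj y * A $$ (b,b) * y"
proof -
  have "qf n A (\<lambda>i. (if i = a then x else 0) + (if i = b then y else 0)) =
     qf n A (\<lambda>i. if i = a then x else 0) + cnj y * (\<Sum>j<n. A $$ (b,j) * (if j = a then x else 0))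
     + y * (\<Sum>i<n. cnj (if i = a then x else 0) * A $$ (i,b)) + cnj y * A $$ (b,b) * y"
    by (rule qf_add_delta[OF assms(2)])
  also have "\<dots> = cnj x * A $$ (a,a) * x + cnj y * A $$ (b,a) * x + y * cnj x * A $$ (a,b) + cnj y * A $$ (b,b) * y"
  proof -
    have r1: "(\<Sum>j<n. A $$ (b,j) * (if j = a then x else 0)) = A $$ (b,a) * x"
    proof -
      have "(\<Sum>j<n. A $$ (b,j) * (if j = a then x else 0)) = (\<Sum>j<n. if j = a then A $$ (b,a) * x else 0)"
        by (rule sum.cong) auto
      then show ?thesis using assms(1) by simp
    qed
    have r2: "(\<Sum>i<n. cnj (if i = a then x else 0) * A $$ (i,b)) = cnj x * A $$ (a,b)"
    proof -
      have "(\<Sum>i<n. cnj (if i = a then x else 0) * A $$ (i,b)) = (\<Sum>i<n. if i = a then cnj x * A $$ (a,b) else 0)"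
        by (rule sum.cong) auto
      then show ?thesis using assms(1) by simp
    qed
    show ?thesis unfolding qf_unit[OF assms(1)] r1 r2 by (simp add: algebra_simps)
  qed
  finally show ?thesis .
qed

lemma polar:
  assumes "\<forall>v. Im (qf n A v) = 0"
  shows "herm n A"
  unfolding herm_def
proof (intro allI impI)
  fix a b assume ab: "a < n" "b < n"
  show "A $$ (b,a) = cnj (A $$ (a,b))"
  proof (cases "a = b")
    case True
    have "Im (qf n A (\<lambda>i. if i = a then 1 else 0)) = 0" using assms by blast
    then have "Im (A $$ (a,a)) = 0" using qf_unit[OF ab(1), of A 1] by simp
    then show ?thesis using True by (simp add: complex_eq_iff)
  next
    case False
    have ia: "Im (A $$ (a,a)) = 0"
      using assms qf_unit[OF ab(1), of A 1] by (metis complex_cnj_one mult_1 mult.right_neutral)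
    have ib: "Im (A $$ (b,b)) = 0"
      using assms qf_unit[OF ab(2), of A 1] by (metis complex_cnj_one mult_1 mult.right_neutral)
    have "Im (qf n A (\<lambda>i. (if i = a then 1 else 0) + (if i = b then 1 else 0))) = 0" using assms by blast
    then have 1: "Im (A $$ (b,a)) + Im (A $$ (a,b)) = 0"
      using qf_two[OF ab False, of A 1 1] ia ib by simp
    have "Im (qf n A (\<lambda>i. (if i = a then 1 else 0) + (if i = b then \<i> else 0))) = 0" using assms by blast
    then have 2: "Re (A $$ (a,b)) - Re (A $$ (b,a)) = 0"
      using qf_two[OF ab False, of A 1 \<i>] ia ib by simp
    show ?thesis using 1 2 by (simp add: complex_eq_iff)
  qed
qed


lemma posqD: "posq n A \<Longrightarrow> Im (qf n A v) = 0" "posq n A \<Longrightarrow> Re (qf n A v) \<ge> 0"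
  by (auto simp: posq_def)

lemma qf_rank:
  fixes A :: "complex mat"
  assumes "A \<in> carrier_mat n n"
  shows "qf n (mat n n (\<lambda>(i,j). A $$ (i,j) - A $$ (i,k) * A $$ (k,j) / a)) v =
    qf n A v - (\<Sum>i<n. cnj (v i) * A $$ (i,k)) * (\<Sum>j<n. A $$ (k,j) * v j) / a"
proof -
  have "qf n (mat n n (\<lambda>(i,j). A $$ (i,j) - A $$ (i,k) * A $$ (k,j) / a)) v =
     (\<Sum>i<n. \<Sum>j<n. cnj (v i) * A $$ (i,j) * v j - (cnj (v i) * A $$ (i,k)) * (A $$ (k,j) * v j) / a)"
    unfolding qf_def by (intro sum.cong refl) (auto simp: algebra_simps)
  also have "\<dots> = qf n A v - (\<Sum>i<n. \<Sum>j<n. (cnj (v i) * A $$ (i,k)) * (A $$ (k,j) * v j) / a)"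
    unfolding qf_def by (simp add: sum_subtractf)
  also have "(\<Sum>i<n. \<Sum>j<n. (cnj (v i) * A $$ (i,k)) * (A $$ (k,j) * v j) / a) =
     (\<Sum>i<n. cnj (v i) * A $$ (i,k)) * (\<Sum>j<n. A $$ (k,j) * v j) / a"
    by (simp add: sum_product sum_divide_distrib)
  finally show ?thesis .
qed

lemma decomp_aux:
  assumes "A \<in> carrier_mat n n" "herm n A" "posq n A"
    "\<forall>i<n. \<forall>j<n. (i < k \<or> j < k) \<longrightarrow> A $$ (i,j) = 0"
  shows "\<exists>(m::nat) U. \<forall>i<n. \<forall>j<n. A $$ (i,j) = (\<Sum>l<m. U l i * cnj (U l j))"
  using assms
proof (induction "n - k" arbitrary: A k)
  case 0
  have kn: "n \<le> k" using 0(1) by simp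
  have z: "\<forall>i<n. \<forall>j<n. A $$ (i,j) = 0"
  proof (intro allI impI)
    fix i j assume "i < n" "j < n"
    then show "A $$ (i,j) = 0" using 0(5) kn by simp
  qed
  have zz: "\<forall>i<n. \<forall>j<n. A $$ (i,j) = (\<Sum>l<(0::nat). (\<lambda>(l::nat) (i::nat). 0::complex) l i * cnj ((\<lambda>(l::nat) (i::nat). 0::complex) l j))"
    using z by simp
  show ?case by (rule exI[where x="0::nat"], rule exI[where x="\<lambda>(l::nat) (i::nat). 0::complex"], rule zz)
next
  case (Suc m')
  note AC = Suc.prems(1) and H = Suc.prems(2) and PQ = Suc.prems(3) and Z = Suc.prems(4)
  have k: "k < n" using Suc.hyps by simp
  have m': "m' = n - Suc k" using Suc.hyps by simp
  have Hji: "A $$ (j,i) = cnj (A $$ (i,j))" if "i < n" "j < n" for i j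
    using H that unfolding herm_def by blast
  have Hc: "cnj (A $$ (i,j)) = A $$ (j,i)" if "i < n" "j < n" for i j
    using Hji[OF that] by simp
  define a where "a = A $$ (k,k)"
  have qa: "qf n A (\<lambda>i. if i = k then 1 else 0) = a"
    using qf_unit[OF k, of A 1] by (simp add: a_def)
  have ima: "Im a = 0" using posqD(1)[OF PQ] qa by metis
  have rea: "Re a \<ge> 0" using posqD(2)[OF PQ] qa by metis
  have areal: "a = complex_of_real (Re a)" using ima by (simp add: complex_eq_iff)
  show ?case
  proof (cases "Re a = 0")
    case True
    then have a0: "a = 0" using ima by (simp add: complex_eq_iff)
    have row: "A $$ (k,j) = 0" if j: "j < n" for j
    proof (rule ccontr)
      assume b0: "A $$ (k,j) \<noteq> 0"
      define b where "b = A $$ (k,j)"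
      have jk: "j \<noteq> k" using b0 a0 a_def by auto
      define s where "s = (Re (A $$ (j,j)) + 1) / (2 * (cmod b)^2)"
      define t where "t = - complex_of_real s * b"
      have cb: "cmod b > 0" using b0 b_def by simp
      have q: "qf n A (\<lambda>i. (if i = j then 1 else 0) + (if i = k then t else 0)) =
        A $$ (j,j) + cnj t * b + t * cnj b"
        using qf_two[OF j k jk, of A 1 t] a0 Hji[OF j k] unfolding a_def b_def by simp
      have cb1: "b * cnj b = complex_of_real ((cmod b)^2)" by (rule complex_norm_square[symmetric])
      have cb2: "cnj b * b = complex_of_real ((cmod b)^2)" using cb1 by (simp only: mult.commute)
      have "cnj t * b = - (complex_of_real s * (cnj b * b))" unfolding t_def by (simp add: mult.assoc)
      then have e1: "Re (cnj t * b) = - s * (cmod b)^2" unfolding cb2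
        by (metis Re_complex_of_real minus_complex.simps(1) mult.commute of_real_mult uminus_complex.sel(1) mult_minus_left)
      have "t * cnj b = - (complex_of_real s * (b * cnj b))" unfolding t_def by (simp add: mult.assoc)
      then have e2: "Re (t * cnj b) = - s * (cmod b)^2" unfolding cb1
        by (metis Re_complex_of_real mult.commute of_real_mult uminus_complex.sel(1) mult_minus_left)
      have "2 * s * (cmod b)^2 = Re (A $$ (j,j)) + 1" unfolding s_def using cb by simp
      then have "Re (qf n A (\<lambda>i. (if i = j then 1 else 0) + (if i = k then t else 0))) = -1"
        unfolding q using e1 e2 by simp
      with posqD(2)[OF PQ] show False by (metis neg_0_le_iff_le not_one_le_zero)
    qed
    have col: "A $$ (i,k) = 0" if i: "i < n" for i
      using Hji[OF k i] row[OF i] by simp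
    have "\<forall>i<n. \<forall>j<n. (i < Suc k \<or> j < Suc k) \<longrightarrow> A $$ (i,j) = 0"
      using Z row col by (metis less_Suc_eq)
    then show ?thesis by (rule Suc.hyps(1)[OF m' AC H PQ])
  next
    case False
    then have ap: "Re a > 0" using rea by simp
    then have anz: "a \<noteq> 0" by auto
    define A' where "A' = mat n n (\<lambda>(i,j). A $$ (i,j) - A $$ (i,k) * A $$ (k,j) / a)"
    have A'C: "A' \<in> carrier_mat n n" by (simp add: A'_def)
    have A'e: "A' $$ (i,j) = A $$ (i,j) - A $$ (i,k) * A $$ (k,j) / a" if "i < n" "j < n" for i j
      using that by (simp add: A'_def)
    have cnja: "cnj a = a" using ima by (simp add: complex_eq_iff)
    have H': "herm n A'" unfolding herm_def
    proof (intro allI impI)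
      fix i j assume ij: "i < n" "j < n"
      show "A' $$ (j,i) = cnj (A' $$ (i,j))"
        using ij k by (simp add: A'e Hc cnja mult.commute)
    qed
    have P': "posq n A'" unfolding posq_def
    proof
      fix v
      define \<beta> where "\<beta> = (\<Sum>j<n. A $$ (k,j) * v j)"
      have \<gamma>: "(\<Sum>i<n. cnj (v i) * A $$ (i,k)) = cnj \<beta>"
        unfolding \<beta>_def cnj_sum using Hc k by (simp add: mult.commute)
      define t where "t = - \<beta> / a"
      have "qf n A (\<lambda>i. v i + (if i = k then t else 0)) = qf n A v + cnj t * \<beta> + t * cnj \<beta> + cnj t * a * t"
        using qf_add_delta[OF k, of A v t] \<gamma> unfolding \<beta>_def a_def by simp
      also have "\<dots> = qf n A v - cnj \<beta> * \<beta> / a"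
        unfolding t_def using anz cnja by (simp add: field_simps power2_eq_square)
      also have "\<dots> = qf n A' v"
        unfolding A'_def qf_rank[OF AC] \<gamma> \<beta>_def by simp
      finally have "qf n A' v = qf n A (\<lambda>i. v i + (if i = k then t else 0))" by simp
      then show "Im (qf n A' v) = 0 \<and> Re (qf n A' v) \<ge> 0" using posqD[OF PQ] by simp
    qed
    have Z': "\<forall>i<n. \<forall>j<n. (i < Suc k \<or> j < Suc k) \<longrightarrow> A' $$ (i,j) = 0"
    proof (intro allI impI)
      fix i j assume ij: "i < n" "j < n" "i < Suc k \<or> j < Suc k"
      have zk: "A $$ (i,k) = 0" if "i < k" "i < n" for i using Z k that by blast
      have zk2: "A $$ (k,j) = 0" if "j < k" "j < n" for j using Z k that by blast
      show "A' $$ (i,j) = 0"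
      proof (cases "i < k \<or> j < k")
        case True
        then show ?thesis using ij Z zk zk2 by (auto simp: A'e)
      next
        case False
        then have "i = k \<or> j = k" using ij by auto
        then show ?thesis using ij anz by (auto simp: A'e a_def)
      qed
    qed
    have "\<exists>(m::nat) U. \<forall>i<n. \<forall>j<n. A' $$ (i,j) = (\<Sum>l<m. U l i * cnj (U l j))"
      by (rule Suc.hyps(1)[OF m' A'C H' P' Z'])
    then obtain m :: nat where "\<exists>U. \<forall>i<n. \<forall>j<n. A' $$ (i,j) = (\<Sum>l<m. U l i * cnj (U l j))" ..
    then obtain U where U: "\<forall>i<n. \<forall>j<n. A' $$ (i,j) = (\<Sum>l<m. U l i * cnj (U l j))" ..
    define sa where "sa = complex_of_real (sqrt (Re a))"
    have ss: "sqrt (Re a) * sqrt (Re a) = Re a" using rea by simp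
    have "sa * sa = complex_of_real (Re a)" unfolding sa_def of_real_mult[symmetric] ss ..
    then have sa2: "sa * sa = a" using areal by simp
    have csa: "cnj sa = sa" by (simp add: sa_def)
    define U' where "U' = (\<lambda>l. if l = m then (\<lambda>i. A $$ (i,k) / sa) else U l)"
    have fin: "\<forall>i<n. \<forall>j<n. A $$ (i,j) = (\<Sum>l<Suc m. U' l i * cnj (U' l j))"
    proof (intro allI impI)
      fix i j assume ij: "i < n" "j < n"
      have "(\<Sum>l<Suc m. U' l i * cnj (U' l j)) = A' $$ (i,j) + A $$ (i,k) / sa * cnj (A $$ (j,k) / sa)"
        using U ij by (simp add: U'_def)
      also have "\<dots> = A $$ (i,j)"
        using ij k anz sa2 csa by (simp add: A'e Hc field_simps)
      finally show "A $$ (i,j) = (\<Sum>l<Suc m. U' l i * cnj (U' l j))" by simp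
    qed
    show ?thesis by (rule exI[where x="Suc m"], rule exI[where x=U'], rule fin)
  qed
qed


lemma psd_iff2: assumes "A \<in> carrier_mat n n"
  shows "psd A \<longleftrightarrow> posq n A"
  using psd_iff[OF assms] polar by (auto simp: posq_def)

lemma decomp:
  assumes "A \<in> carrier_mat n n" "psd A"
  shows "\<exists>(m::nat) U. \<forall>i<n. \<forall>j<n. A $$ (i,j) = (\<Sum>l<m. U l i * cnj (U l j))"
  using decomp_aux[of A n 0] assms psd_iff[OF assms(1)] by auto

lemma swap3:
  "(\<Sum>i\<in>A. \<Sum>j\<in>B. \<Sum>l\<in>C. f i j l) = (\<Sum>l\<in>C. \<Sum>j\<in>B. \<Sum>i\<in>A. (f i j l :: complex))"
proof -
  have "(\<Sum>i\<in>A. \<Sum>j\<in>B. \<Sum>l\<in>C. f i j l) = (\<Sum>i\<in>A. \<Sum>l\<in>C. \<Sum>j\<in>B. f i j l)"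
    by (rule sum.cong[OF refl], rule sum.swap)
  also have "\<dots> = (\<Sum>l\<in>C. \<Sum>i\<in>A. \<Sum>j\<in>B. f i j l)" by (rule sum.swap)
  also have "\<dots> = (\<Sum>l\<in>C. \<Sum>j\<in>B. \<Sum>i\<in>A. f i j l)"
    by (rule sum.cong[OF refl], rule sum.swap)
  finally show ?thesis .
qed

lemma tp_pos:
  assumes A: "A \<in> carrier_mat n n" "psd A" and Z: "Z \<in> carrier_mat n n" "psd Z"
  shows "Im (tp n A Z) = 0 \<and> Re (tp n A Z) \<ge> 0"
proof -
  obtain m :: nat where "\<exists>U. \<forall>i<n. \<forall>j<n. A $$ (i,j) = (\<Sum>l<m. U l i * cnj (U l j))"
    using decomp[OF A] ..
  then obtain U where U: "\<forall>i<n. \<forall>j<n. A $$ (i,j) = (\<Sum>l<m. U l i * cnj (U l j))" ..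
  have PZ: "posq n Z" using psd_iff2[OF Z(1)] Z(2) by simp
  have "tp n A Z = (\<Sum>i<n. \<Sum>j<n. \<Sum>l<m. U l i * cnj (U l j) * Z $$ (j,i))"
    unfolding tp_def by (simp add: U sum_distrib_right)
  also have "\<dots> = (\<Sum>l<m. \<Sum>j<n. \<Sum>i<n. U l i * cnj (U l j) * Z $$ (j,i))"
    by (rule swap3)
  also have "\<dots> = (\<Sum>l<m. qf n Z (U l))"
    unfolding qf_def by (simp add: ac_simps)
  finally have e: "tp n A Z = (\<Sum>l<m. qf n Z (U l))" .
  show ?thesis unfolding e using posqD[OF PZ] by (simp add: Im_sum Re_sum sum_nonneg)
qed

lemma qf_add: "A \<in> carrier_mat n n \<Longrightarrow> B \<in> carrier_mat n n \<Longrightarrow> qf n (A + B) v = qf n A v + qf n B v"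
  unfolding qf_def by (simp add: sum.distrib[symmetric] algebra_simps)

lemma qf_diff: "A \<in> carrier_mat n n \<Longrightarrow> B \<in> carrier_mat n n \<Longrightarrow> qf n (A - B) v = qf n A v - qf n B v"
  unfolding qf_def by (simp add: sum_subtractf[symmetric] algebra_simps)

lemma qf_smult: "A \<in> carrier_mat n n \<Longrightarrow> qf n (c \<cdot>\<^sub>m A) v = c * qf n A v"
  unfolding qf_def by (simp add: sum_distrib_left algebra_simps)

lemma qf_one: "qf n (1\<^sub>m n) v = complex_of_real (\<Sum>i<n. (cmod (v i))^2)"
proof -
  have "qf n (1\<^sub>m n) v = (\<Sum>i<n. \<Sum>j<n. if i = j then cnj (v i) * v i else 0)"
    unfolding qf_def by (intro sum.cong refl) auto
  also have "\<dots> = (\<Sum>i<n. cnj (v i) * v i)" by simp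
  also have "\<dots> = complex_of_real (\<Sum>i<n. (cmod (v i))^2)"
    by (simp only: of_real_sum complex_norm_square) (simp add: mult.commute)
  finally show ?thesis .
qed

lemma tp_add: "X \<in> carrier_mat n n \<Longrightarrow> Y \<in> carrier_mat n n \<Longrightarrow> tp n A (c \<cdot>\<^sub>m X + Y) = c * tp n A X + tp n A Y"
  unfolding tp_def by (simp add: sum.distrib sum_distrib_left algebra_simps)

lemma tp_diff1: "A \<in> carrier_mat n n \<Longrightarrow> B \<in> carrier_mat n n \<Longrightarrow> tp n (A - B) X = tp n A X - tp n B X"
  unfolding tp_def by (simp add: sum_subtractf[symmetric] algebra_simps)

lemma tp_one: "tp n (1\<^sub>m n) X = (\<Sum>i<n. X $$ (i,i))"
proof -
  have "tp n (1\<^sub>m n) X = (\<Sum>i<n. \<Sum>j<n. if i = j then X $$ (i,i) else 0)"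
    unfolding tp_def by (intro sum.cong refl) auto
  then show ?thesis by simp
qed




lemma swap4:
  "(\<Sum>i\<in>A. \<Sum>j\<in>B. \<Sum>c\<in>C. \<Sum>d\<in>D. f i j c d) = (\<Sum>c\<in>C. \<Sum>d\<in>D. \<Sum>i\<in>A. \<Sum>j\<in>B. (f i j c d :: complex))"
proof -
  have "(\<Sum>i\<in>A. \<Sum>j\<in>B. \<Sum>c\<in>C. \<Sum>d\<in>D. f i j c d) = (\<Sum>i\<in>A. \<Sum>c\<in>C. \<Sum>j\<in>B. \<Sum>d\<in>D. f i j c d)"
    by (rule sum.cong[OF refl], rule sum.swap)
  also have "\<dots> = (\<Sum>c\<in>C. \<Sum>i\<in>A. \<Sum>j\<in>B. \<Sum>d\<in>D. f i j c d)" by (rule sum.swap)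
  also have "\<dots> = (\<Sum>c\<in>C. \<Sum>i\<in>A. \<Sum>d\<in>D. \<Sum>j\<in>B. f i j c d)"
    by (rule sum.cong[OF refl], rule sum.cong[OF refl], rule sum.swap)
  also have "\<dots> = (\<Sum>c\<in>C. \<Sum>d\<in>D. \<Sum>i\<in>A. \<Sum>j\<in>B. f i j c d)"
    by (rule sum.cong[OF refl], rule sum.swap)
  finally show ?thesis .
qed

lemma block_idx: "c < N \<Longrightarrow> d < N \<Longrightarrow> block N X i j $$ (c,d) = X $$ (i*N+c, j*N+d)"
  by (simp add: block_def)

definition Zm :: "nat \<Rightarrow> nat \<Rightarrow> complex mat \<Rightarrow> (nat \<Rightarrow> complex) \<Rightarrow> complex mat" where
  "Zm N k X a = mat N N (\<lambda>(c,d). \<Sum>i<k. \<Sum>j<k. cnj (a i) * a j * X $$ (i*N+c, j*N+d))"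

lemma Zm_carrier: "Zm N k X a \<in> carrier_mat N N" by (simp add: Zm_def)

lemma tp_block_sum:
  "(\<Sum>i<k. \<Sum>j<k. cnj (a i) * a j * tp N G (block N X i j)) = tp N G (Zm N k X a)"
proof -
  have "(\<Sum>i<k. \<Sum>j<k. cnj (a i) * a j * tp N G (block N X i j)) =
        (\<Sum>i<k. \<Sum>j<k. \<Sum>c<N. \<Sum>d<N. cnj (a i) * a j * (G $$ (c,d) * X $$ (i*N+d, j*N+c)))"
    unfolding tp_def by (simp add: block_idx sum_distrib_left)
  also have "\<dots> = (\<Sum>c<N. \<Sum>d<N. \<Sum>i<k. \<Sum>j<k. cnj (a i) * a j * (G $$ (c,d) * X $$ (i*N+d, j*N+c)))"
    by (rule swap4)
  also have "\<dots> = tp N G (Zm N k X a)"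
    unfolding tp_def Zm_def by (simp add: sum_distrib_left ac_simps)
  finally show ?thesis .
qed

lemma psd_Zm:
  assumes X: "X \<in> carrier_mat (k*N) (k*N)" "psd X" and N: "N > 0"
  shows "psd (Zm N k X a)"
proof -
  have PX: "posq (k*N) X" using psd_iff2[OF X(1)] X(2) by simp
  have "posq N (Zm N k X a)" unfolding posq_def
  proof
    fix u
    define w where "w = (\<lambda>p. a (p div N) * u (p mod N))"
    have wi: "w (i*N+c) = a i * u c" if "c < N" for i c
      using that N by (simp add: w_def)
    have "qf (k*N) X w = (\<Sum>i<k. \<Sum>c<N. \<Sum>q<k*N. cnj (w (i*N+c)) * X $$ (i*N+c, q) * w q)"
      unfolding qf_def by (rule sum_split_mult)
    also have "\<dots> = (\<Sum>i<k. \<Sum>c<N. \<Sum>j<k. \<Sum>d<N. cnj (w (i*N+c)) * X $$ (i*N+c, j*N+d) * w (j*N+d))"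
      by (simp add: sum_split_mult)
    also have "\<dots> = (\<Sum>i<k. \<Sum>c<N. \<Sum>j<k. \<Sum>d<N. cnj (a i * u c) * X $$ (i*N+c, j*N+d) * (a j * u d))"
      by (intro sum.cong refl) (simp add: wi)
    also have "\<dots> = (\<Sum>c<N. \<Sum>i<k. \<Sum>j<k. \<Sum>d<N. cnj (a i * u c) * X $$ (i*N+c, j*N+d) * (a j * u d))"
      by (rule sum.swap)
    also have "\<dots> = (\<Sum>c<N. \<Sum>d<N. \<Sum>i<k. \<Sum>j<k. cnj (a i * u c) * X $$ (i*N+c, j*N+d) * (a j * u d))"
    proof (rule sum.cong[OF refl])
      fix c
      have "(\<Sum>i<k. \<Sum>j<k. \<Sum>d<N. cnj (a i * u c) * X $$ (i*N+c, j*N+d) * (a j * u d))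
          = (\<Sum>i<k. \<Sum>d<N. \<Sum>j<k. cnj (a i * u c) * X $$ (i*N+c, j*N+d) * (a j * u d))"
        by (rule sum.cong[OF refl], rule sum.swap)
      also have "\<dots> = (\<Sum>d<N. \<Sum>i<k. \<Sum>j<k. cnj (a i * u c) * X $$ (i*N+c, j*N+d) * (a j * u d))"
        by (rule sum.swap)
      finally show "(\<Sum>i<k. \<Sum>j<k. \<Sum>d<N. cnj (a i * u c) * X $$ (i*N+c, j*N+d) * (a j * u d))
          = (\<Sum>d<N. \<Sum>i<k. \<Sum>j<k. cnj (a i * u c) * X $$ (i*N+c, j*N+d) * (a j * u d))" .
    qed
    also have "\<dots> = qf N (Zm N k X a) u"
      unfolding qf_def Zm_def by (simp add: sum_distrib_left sum_distrib_right ac_simps)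
    finally have "qf N (Zm N k X a) u = qf (k*N) X w" by simp
    then show "Im (qf N (Zm N k X a) u) = 0 \<and> Re (qf N (Zm N k X a) u) \<ge> 0"
      using posqD[OF PX] by simp
  qed
  then show ?thesis using psd_iff2[OF Zm_carrier] by simp
qed


definition chan :: "nat \<Rightarrow> complex mat \<Rightarrow> complex mat \<Rightarrow> complex mat" where
  "chan N G X = mat 2 2 (\<lambda>(i,j). if i = 0 \<and> j = 0 then tp N (1\<^sub>m N - G) X
      else if i = 1 \<and> j = 1 then tp N G X else 0)"

lemma sum2: "(\<Sum>s<(2::nat). f s) = f 0 + (f 1 :: complex)"
  by (simp add: numeral_2_eq_2)

lemma chan_idx: "chan N G X $$ (s,t) = (if s = 0 \<and> t = 0 then tp N (1\<^sub>m N - G) X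
      else if s = 1 \<and> t = 1 then tp N G X else 0)" if "s < 2" "t < 2"
  using that by (simp add: chan_def)

lemma chan_cp:
  assumes N: "N > 0" and G: "G \<in> carrier_mat N N" "psd G" "psd (1\<^sub>m N - G)"
    and X: "X \<in> carrier_mat (k*N) (k*N)" "psd X"
  shows "psd (id_tensor k N 2 (chan N G) X)"
proof -
  define Y where "Y = id_tensor k N 2 (chan N G) X"
  define G0 where "G0 = 1\<^sub>m N - G"
  have G0C: "G0 \<in> carrier_mat N N" unfolding G0_def by (rule minus_carrier_mat[OF G(1)])
  have YC: "Y \<in> carrier_mat (k*2) (k*2)" by (simp add: Y_def id_tensor_def)
  have Yidx: "Y $$ (i*2+s, j*2+t) = (if s = 0 \<and> t = 0 then tp N G0 (block N X i j)
      else if s = 1 \<and> t = 1 then tp N G (block N X i j) else 0)"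
    if "i < k" "j < k" "s < 2" "t < 2" for i j s t
  proof -
    have "i*2+s < k*2" "j*2+t < k*2" using that by linarith+
    then have "Y $$ (i*2+s, j*2+t) = chan N G (block N X i j) $$ (s,t)"
      using that by (simp add: Y_def id_tensor_def)
    then show ?thesis using that by (simp add: chan_idx G0_def)
  qed
  have "posq (k*2) Y" unfolding posq_def
  proof
    fix v
    have "qf (k*2) Y v = (\<Sum>i<k. \<Sum>s<2. \<Sum>q<k*2. cnj (v (i*2+s)) * Y $$ (i*2+s, q) * v q)"
      unfolding qf_def by (rule sum_split_mult)
    also have "\<dots> = (\<Sum>i<k. \<Sum>s<2. \<Sum>j<k. \<Sum>t<2. cnj (v (i*2+s)) * Y $$ (i*2+s, j*2+t) * v (j*2+t))"
      by (simp add: sum_split_mult)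
    also have "\<dots> = (\<Sum>i<k. \<Sum>s<2. \<Sum>j<k. \<Sum>t<2. cnj (v (i*2+s)) * (if s = 0 \<and> t = 0 then tp N G0 (block N X i j)
      else if s = 1 \<and> t = 1 then tp N G (block N X i j) else 0) * v (j*2+t))"
      by (intro sum.cong refl) (simp add: Yidx)
    also have "\<dots> = (\<Sum>i<k. \<Sum>j<k. cnj (v (i*2)) * v (j*2) * tp N G0 (block N X i j))
       + (\<Sum>i<k. \<Sum>j<k. cnj (v (i*2+1)) * v (j*2+1) * tp N G (block N X i j))"
      by (simp add: sum2 sum.distrib ac_simps)
    also have "\<dots> = tp N G0 (Zm N k X (\<lambda>i. v (i*2))) + tp N G (Zm N k X (\<lambda>i. v (i*2+1)))"
      using tp_block_sum[of "\<lambda>i. v (i*2)" N G0 X k] tp_block_sum[of "\<lambda>i. v (i*2+1)" N G X k] by simp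
    finally have e: "qf (k*2) Y v = tp N G0 (Zm N k X (\<lambda>i. v (i*2))) + tp N G (Zm N k X (\<lambda>i. v (i*2+1)))" .
    have p1: "Im (tp N G0 (Zm N k X (\<lambda>i. v (i*2)))) = 0 \<and> Re (tp N G0 (Zm N k X (\<lambda>i. v (i*2)))) \<ge> 0"
      by (rule tp_pos[OF G0C _ Zm_carrier psd_Zm[OF X N]]) (use G in \<open>simp add: G0_def\<close>)
    have p2: "Im (tp N G (Zm N k X (\<lambda>i. v (i*2+1)))) = 0 \<and> Re (tp N G (Zm N k X (\<lambda>i. v (i*2+1)))) \<ge> 0"
      by (rule tp_pos[OF G(1,2) Zm_carrier psd_Zm[OF X N]])
    show "Im (qf (k*2) Y v) = 0 \<and> Re (qf (k*2) Y v) \<ge> 0"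
      unfolding e using p1 p2 by simp
  qed
  then show ?thesis using psd_iff2[OF YC] by (simp add: Y_def)
qed

lemma chan_cptp:
  assumes N: "N > 0" and G: "G \<in> carrier_mat N N" "psd G" "psd (1\<^sub>m N - G)"
  shows "cptp N 2 (chan N G)"
  unfolding cptp_def
proof (intro conjI ballI allI impI)
  fix X :: "complex mat" assume "X \<in> carrier_mat N N"
  show "chan N G X \<in> carrier_mat 2 2" by (simp add: chan_def)
next
  fix X Y :: "complex mat" and c :: complex
  assume XY: "X \<in> carrier_mat N N" "Y \<in> carrier_mat N N"
  show "chan N G (c \<cdot>\<^sub>m X + Y) = c \<cdot>\<^sub>m chan N G X + chan N G Y"
    by (rule eq_matI) (auto simp: chan_def tp_add[OF XY])
next
  fix X :: "complex mat" assume X: "X \<in> carrier_mat N N"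
  have "mtrace (chan N G X) = tp N (1\<^sub>m N - G) X + tp N G X"
    by (simp add: mtrace_def chan_def sum2)
  also have "\<dots> = tp N (1\<^sub>m N) X" using G by (simp add: tp_diff1)
  also have "\<dots> = mtrace X" using X by (simp add: tp_one mtrace_def)
  finally show "mtrace (chan N G X) = mtrace X" .
next
  fix k and X :: "complex mat"
  assume "X \<in> carrier_mat (k*N) (k*N)" "psd X"
  then show "psd (id_tensor k N 2 (chan N G) X)" by (rule chan_cp[OF N G])
qed




lemma two_cases: "i < (2::nat) \<Longrightarrow> i = 0 \<or> i = 1" by auto

lemma mult2: assumes "A \<in> carrier_mat 2 2" "B \<in> carrier_mat 2 2" "i < 2" "j < 2"
  shows "(A * B) $$ (i,j) = A $$ (i,0) * B $$ (0,j) + A $$ (i,1) * B $$ (1,j)"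
  using assms by (simp add: scalar_prod_def numeral_2_eq_2)

lemma psd_scalar: assumes "s \<ge> 0"
  shows "psd (complex_of_real s \<cdot>\<^sub>m 1\<^sub>m n)"
proof -
  have C: "complex_of_real s \<cdot>\<^sub>m 1\<^sub>m n \<in> carrier_mat n n" by simp
  have "posq n (complex_of_real s \<cdot>\<^sub>m 1\<^sub>m n)" unfolding posq_def
    using assms by (simp add: qf_smult qf_one sum_nonneg)
  then show ?thesis using psd_iff2[OF C] by simp
qed

lemma psd_sqrt_scalar:
  assumes s: "s \<ge> 0"
  shows "psd_sqrt (complex_of_real s \<cdot>\<^sub>m 1\<^sub>m 2) = complex_of_real (sqrt s) \<cdot>\<^sub>m 1\<^sub>m 2"
proof -
  define B0 where "B0 = complex_of_real (sqrt s) \<cdot>\<^sub>m (1\<^sub>m 2 :: complex mat)"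
  have B0C: "B0 \<in> carrier_mat 2 2" by (simp add: B0_def)
  have B0P: "psd B0" unfolding B0_def by (rule psd_scalar) (simp add: s)
  have B0S: "B0 * B0 = complex_of_real s \<cdot>\<^sub>m 1\<^sub>m 2"
  proof (rule eq_matI)
    fix i j assume ij: "i < dim_row (complex_of_real s \<cdot>\<^sub>m (1\<^sub>m 2 :: complex mat))"
       "j < dim_col (complex_of_real s \<cdot>\<^sub>m (1\<^sub>m 2 :: complex mat))"
    then have ij2: "i < 2" "j < 2" by auto
    have "complex_of_real (sqrt s) * complex_of_real (sqrt s) = complex_of_real s"
      using s by (simp flip: of_real_mult)
    then show "(B0 * B0) $$ (i,j) = (complex_of_real s \<cdot>\<^sub>m 1\<^sub>m 2) $$ (i,j)"
      using two_cases[OF ij2(1)] two_cases[OF ij2(2)] mult2[OF B0C B0C ij2]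
      by (auto simp: B0_def)
  qed (simp_all add: B0_def)
  have uniq: "B = B0" if BC: "B \<in> carrier_mat 2 2" and BP: "psd B" and BS: "B * B = complex_of_real s \<cdot>\<^sub>m 1\<^sub>m 2" for B
  proof -
    have HP: "herm 2 B \<and> posq 2 B" using BP unfolding psd_iff[OF BC] .
    have H: "herm 2 B" using HP by (rule conjunct1)
    have PQ: "posq 2 B" using HP by (rule conjunct2)
    define x where "x = B $$ (0,0)"
    define y where "y = B $$ (1,1)"
    define z where "z = B $$ (0,1)"
    have b10: "B $$ (1,0) = cnj z" using H[unfolded herm_def, rule_format, of 0 1] unfolding z_def by simp
    have "B $$ (0,0) = cnj (B $$ (0,0))" using H[unfolded herm_def, rule_format, of 0 0] by simp
    then have xr: "cnj x = x" unfolding x_def by (rule sym)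
    have "B $$ (1,1) = cnj (B $$ (1,1))" using H[unfolded herm_def, rule_format, of 1 1] by simp
    then have yr: "cnj y = y" unfolding y_def by (rule sym)
    have qx: "qf 2 B (\<lambda>i. if i = 0 then 1 else 0) = x" using qf_unit[of 0 2 B 1] by (simp add: x_def)
    have qy: "qf 2 B (\<lambda>i. if i = 1 then 1 else 0) = y" using qf_unit[of 1 2 B 1] by (simp add: y_def)
    have rx: "Re x \<ge> 0" using posqD(2)[OF PQ] qx by metis
    have ry: "Re y \<ge> 0" using posqD(2)[OF PQ] qy by metis
    have ix: "Im x = 0" using xr by (simp add: complex_eq_iff)
    have iy: "Im y = 0" using yr by (simp add: complex_eq_iff)
    have e00: "x * x + z * cnj z = complex_of_real s"
      using arg_cong[OF BS, of "\<lambda>M. M $$ (0,0)"] mult2[OF BC BC, of 0 0] b10 BC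
      by (simp add: x_def z_def)
    have e01: "x * z + z * y = 0"
      using arg_cong[OF BS, of "\<lambda>M. M $$ (0,1)"] mult2[OF BC BC, of 0 1] BC
      by (simp add: x_def z_def y_def)
    have e11: "cnj z * z + y * y = complex_of_real s"
      using arg_cong[OF BS, of "\<lambda>M. M $$ (1,1)"] mult2[OF BC BC, of 1 1] b10 BC
      by (simp add: x_def z_def y_def)
    have z0: "z = 0"
    proof (rule ccontr)
      assume zn: "z \<noteq> 0"
      have "z * (x + y) = 0" using e01 by (simp add: algebra_simps)
      then have "x + y = 0" using zn by simp
      then have "Re x + Re y = 0" by (metis plus_complex.sel(1) zero_complex.sel(1))
      then have x0: "x = 0" and y0: "y = 0" using rx ry ix iy by (auto simp: complex_eq_iff)
      have "qf 2 B (\<lambda>i. (if i = 0 then 1 else 0) + (if i = 1 then - cnj z else 0)) =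
         cnj 1 * B $$ (0,0) * 1 + cnj (- cnj z) * B $$ (1,0) * 1 + (- cnj z) * cnj 1 * B $$ (0,1) + cnj (- cnj z) * B $$ (1,1) * (- cnj z)"
        by (rule qf_two) auto
      also have "\<dots> = - 2 * (z * cnj z)"
        using x0 y0 b10 unfolding x_def y_def z_def by (simp add: algebra_simps)
      also have "\<dots> = - 2 * complex_of_real ((cmod z)^2)" by (simp only: complex_norm_square)
      finally have "Re (qf 2 B (\<lambda>i. (if i = 0 then 1 else 0) + (if i = 1 then - cnj z else 0))) = - 2 * (cmod z)^2"
        by simp
      moreover have "(cmod z)^2 > 0" using zn by simp
      moreover have "Re (qf 2 B (\<lambda>i. (if i = 0 then 1 else 0) + (if i = 1 then - cnj z else 0))) \<ge> 0"
        by (rule posqD(2)[OF PQ])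
      ultimately show False by linarith
    qed
    have "x * x = complex_of_real s" using e00 z0 by simp
    then have "Re (x * x) = s" by simp
    then have "Re x * Re x = s" using ix by simp
    then have "sqrt s = sqrt (Re x * Re x)" by simp
    also have "\<dots> = \<bar>Re x\<bar>" by (rule real_sqrt_abs2)
    finally have xs: "Re x = sqrt s" using rx by simp
    have "y * y = complex_of_real s" using e11 z0 by simp
    then have "Re (y * y) = s" by simp
    then have "Re y * Re y = s" using iy by simp
    then have "sqrt s = sqrt (Re y * Re y)" by simp
    also have "\<dots> = \<bar>Re y\<bar>" by (rule real_sqrt_abs2)
    finally have ys: "Re y = sqrt s" using ry by simp
    have xv: "x = complex_of_real (sqrt s)" using xs ix by (simp add: complex_eq_iff)
    have yv: "y = complex_of_real (sqrt s)" using ys iy by (simp add: complex_eq_iff)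
    show "B = B0"
    proof (rule eq_matI)
      fix i j assume "i < dim_row B0" "j < dim_col B0"
      then have ij2: "i < 2" "j < 2" by (auto simp: B0_def)
      show "B $$ (i,j) = B0 $$ (i,j)"
        using two_cases[OF ij2(1)] two_cases[OF ij2(2)] xv yv z0 b10
        by (auto simp: B0_def x_def y_def z_def)
    qed (use BC in \<open>simp_all add: B0_def\<close>)
  qed
  have "psd_sqrt (complex_of_real s \<cdot>\<^sub>m 1\<^sub>m 2) = B0"
    unfolding psd_sqrt_def
  proof (rule the_equality)
    show "B0 \<in> carrier_mat (dim_row (complex_of_real s \<cdot>\<^sub>m (1\<^sub>m 2 :: complex mat))) (dim_row (complex_of_real s \<cdot>\<^sub>m (1\<^sub>m 2 :: complex mat))) \<and> psd B0 \<and> B0 * B0 = complex_of_real s \<cdot>\<^sub>m 1\<^sub>m 2"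
      using B0C B0P B0S by simp
  next
    fix B assume "B \<in> carrier_mat (dim_row (complex_of_real s \<cdot>\<^sub>m (1\<^sub>m 2 :: complex mat))) (dim_row (complex_of_real s \<cdot>\<^sub>m (1\<^sub>m 2 :: complex mat))) \<and> psd B \<and> B * B = complex_of_real s \<cdot>\<^sub>m 1\<^sub>m 2"
    then show "B = B0" using uniq by simp
  qed
  then show ?thesis by (simp add: B0_def)
qed


lemma td2:
  assumes C: "\<sigma> \<in> carrier_mat 2 2" and h: "\<sigma> $$ (1,0) = cnj (\<sigma> $$ (0,1))"
    and r: "Im (\<sigma> $$ (0,0)) = 0" and t: "\<sigma> $$ (0,0) + \<sigma> $$ (1,1) = 1"
  shows "trace_dist \<sigma> ket1bra = sqrt ((Re (\<sigma> $$ (0,0)))^2 + (cmod (\<sigma> $$ (0,1)))^2)"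
proof -
  define a where "a = Re (\<sigma> $$ (0,0))"
  define z where "z = \<sigma> $$ (0,1)"
  define s where "s = a^2 + (cmod z)^2"
  have s0: "s \<ge> 0" by (simp add: s_def)
  have p: "\<sigma> $$ (0,0) = complex_of_real a" using r by (simp add: a_def complex_eq_iff)
  have q: "\<sigma> $$ (1,1) = 1 - complex_of_real a" using t p by (simp add: algebra_simps)
  define Y where "Y = \<sigma> - ket1bra"
  have KC: "ket1bra \<in> carrier_mat 2 2" by (simp add: ket1bra_def)
  have YC: "Y \<in> carrier_mat 2 2" unfolding Y_def by (rule minus_carrier_mat[OF KC])
  have Y00: "Y $$ (0,0) = complex_of_real a" using C p by (simp add: Y_def ket1bra_def)
  have Y01: "Y $$ (0,1) = z" using C by (simp add: Y_def ket1bra_def z_def)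
  have Y10: "Y $$ (1,0) = cnj z" using C h by (simp add: Y_def ket1bra_def z_def)
  have Y11: "Y $$ (1,1) = - complex_of_real a" using C q by (simp add: Y_def ket1bra_def)
  have DC: "dagger Y \<in> carrier_mat 2 2" using YC by (simp add: dagger_def)
  have Didx: "dagger Y $$ (i,j) = cnj (Y $$ (j,i))" if "i < 2" "j < 2" for i j
    using that YC by (simp add: dagger_def)
  have zz: "z * cnj z = complex_of_real ((cmod z)^2)" by (simp only: complex_norm_square)
  have zz2: "cnj z * z = complex_of_real ((cmod z)^2)" using zz by (simp only: mult.commute)
  have aa: "complex_of_real a * complex_of_real a = complex_of_real (a^2)" by (simp add: power2_eq_square)
  have DY: "dagger Y * Y = complex_of_real s \<cdot>\<^sub>m 1\<^sub>m 2"
  proof (rule eq_matI)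
    fix i j assume "i < dim_row (complex_of_real s \<cdot>\<^sub>m (1\<^sub>m 2 :: complex mat))"
       "j < dim_col (complex_of_real s \<cdot>\<^sub>m (1\<^sub>m 2 :: complex mat))"
    then have ij2: "i < 2" "j < 2" by auto
    have e: "(dagger Y * Y) $$ (i,j) = cnj (Y $$ (0,i)) * Y $$ (0,j) + cnj (Y $$ (1,i)) * Y $$ (1,j)"
      using mult2[OF DC YC ij2] Didx ij2 by simp
    show "(dagger Y * Y) $$ (i,j) = (complex_of_real s \<cdot>\<^sub>m 1\<^sub>m 2) $$ (i,j)"
      using two_cases[OF ij2(1)] two_cases[OF ij2(2)]
    proof (elim disjE)
      assume "i = 0" "j = 0" then show ?thesis unfolding e using Y00 Y10 zz aa by (simp add: s_def)
    next
      assume "i = 0" "j = 1" then show ?thesis unfolding e using Y00 Y10 Y01 Y11 by (simp add: algebra_simps)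
    next
      assume "i = 1" "j = 0" then show ?thesis unfolding e using Y00 Y10 Y01 Y11 by (simp add: algebra_simps)
    next
      assume "i = 1" "j = 1" then show ?thesis unfolding e using Y01 Y11 zz2 aa by (simp add: s_def algebra_simps)
    qed
  qed (use DC YC in \<open>simp_all\<close>)
  have "trace_norm Y = Re (mtrace (complex_of_real (sqrt s) \<cdot>\<^sub>m 1\<^sub>m 2))"
    unfolding trace_norm_def DY psd_sqrt_scalar[OF s0] ..
  also have "\<dots> = 2 * sqrt s" by (simp add: mtrace_def numeral_2_eq_2)
  finally show ?thesis unfolding trace_dist_def Y_def[symmetric] s_def a_def z_def by simp
qed




lemma rsup_le: assumes "\<forall>x\<in>S. x \<le> b" "0 \<le> b" shows "rsup S \<le> b"
  using assms unfolding rsup_def by (auto intro: cSup_least)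

lemma le_rsup: assumes "x \<in> S" "bdd_above S" shows "x \<le> rsup S"
  using assms unfolding rsup_def by (auto intro: cSup_upper)

lemma rsup_nonneg: assumes "\<forall>x\<in>S. 0 \<le> x" "bdd_above S" shows "0 \<le> rsup S"
proof (cases "S = {}")
  case True then show ?thesis by (simp add: rsup_def)
next
  case False
  then obtain x where "x \<in> S" by blast
  then show ?thesis using assms le_rsup[of x S] by force
qed

lemma densD: assumes "\<rho> \<in> density_ops N"
  shows "\<rho> \<in> carrier_mat N N" "psd \<rho>" "tp N (1\<^sub>m N) \<rho> = 1"
proof -
  show C: "\<rho> \<in> carrier_mat N N" using assms by (simp add: density_ops_def)
  show "psd \<rho>" using assms by (simp add: density_ops_def)
  have "mtrace \<rho> = 1" using assms by (simp add: density_ops_def)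
  then show "tp N (1\<^sub>m N) \<rho> = 1" using C by (simp add: tp_one mtrace_def)
qed

lemma tp_lin1: assumes "A \<in> carrier_mat N N" "B \<in> carrier_mat N N"
  shows "tp N (a \<cdot>\<^sub>m A + b \<cdot>\<^sub>m B) X = a * tp N A X + b * tp N B X"
  using assms unfolding tp_def by (simp add: sum.distrib sum_distrib_left algebra_simps)

lemma test_bounds:
  assumes T: "T \<in> carrier_mat N N" "psd T" "psd (1\<^sub>m N - T)" and r: "\<rho> \<in> density_ops N"
  shows "tp N T \<rho> = complex_of_real (Re (tp N T \<rho>))" "0 \<le> Re (tp N T \<rho>)" "Re (tp N T \<rho>) \<le> 1"
    "tp N (1\<^sub>m N - T) \<rho> = 1 - tp N T \<rho>"
proof -
  have C1: "1\<^sub>m N - T \<in> carrier_mat N N" by (rule minus_carrier_mat[OF T(1)])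
  have a: "Im (tp N T \<rho>) = 0 \<and> Re (tp N T \<rho>) \<ge> 0" by (rule tp_pos[OF T(1,2) densD(1,2)[OF r]])
  have b: "Im (tp N (1\<^sub>m N - T) \<rho>) = 0 \<and> Re (tp N (1\<^sub>m N - T) \<rho>) \<ge> 0"
    by (rule tp_pos[OF C1 T(3) densD(1,2)[OF r]])
  show e: "tp N (1\<^sub>m N - T) \<rho> = 1 - tp N T \<rho>"
    using tp_diff1[of "1\<^sub>m N" N T \<rho>] T(1) densD(3)[OF r] by simp
  show "tp N T \<rho> = complex_of_real (Re (tp N T \<rho>))" using a by (simp add: complex_eq_iff)
  show "0 \<le> Re (tp N T \<rho>)" using a by simp
  show "Re (tp N T \<rho>) \<le> 1" using b unfolding e by simp
qed


lemma lin_aux: "(A::real) \<le> x \<Longrightarrow> y \<le> d \<Longrightarrow> z = A + y \<Longrightarrow> x \<le> a \<Longrightarrow> d \<le> \<delta> \<Longrightarrow> z \<le> a + \<delta>"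
  by linarith

lemma partB:
  assumes N: "N > 0" and M: "M0 \<ge> 1"
    and P: "P \<subseteq> density_ops N" and E: "E \<subseteq> density_ops N"
    and T: "T \<in> carrier_mat N N" "psd T" "psd (1\<^sub>m N - T)"
    and TE: "rsup ((\<lambda>\<tau>. Re (mtrace (T * \<tau>))) ` E) \<le> 1 / M0"
    and \<delta>: "\<delta> > 0"
  shows "\<exists>\<epsilon>. \<epsilon> \<in> {\<epsilon> \<in> {0..1}. \<exists>F. cptp N 2 F \<and> (\<forall>\<rho>\<in>P. trace_dist (F \<rho>) ket1bra \<le> \<epsilon>) \<and>
        (\<forall>\<tau>\<in>E. F \<tau> \<in> battery_set M0)} \<and>
     \<epsilon> \<le> rsup ((\<lambda>\<rho>. Re (mtrace ((1\<^sub>m N - T) * \<rho>))) ` P) + \<delta>"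
proof -
  define a where "a = rsup ((\<lambda>\<rho>. Re (mtrace ((1\<^sub>m N - T) * \<rho>))) ` P)"
  have C1: "1\<^sub>m N - T \<in> carrier_mat N N" by (rule minus_carrier_mat[OF T(1)])
  define q where "q = (\<lambda>X. Re (tp N T X))"
  have qb: "tp N T X = complex_of_real (q X)" "0 \<le> q X" "q X \<le> 1"
    "tp N (1\<^sub>m N - T) X = 1 - tp N T X" if "X \<in> density_ops N" for X
    using test_bounds[OF T that] unfolding q_def by auto
  have mt1: "Re (mtrace ((1\<^sub>m N - T) * X)) = 1 - q X" if "X \<in> density_ops N" for X
    using mtrace_mult[OF C1 densD(1)[OF that]] qb[OF that] by simp
  have mtT: "Re (mtrace (T * X)) = q X" if "X \<in> density_ops N" for X
    using mtrace_mult[OF T(1) densD(1)[OF that]] unfolding q_def by simp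
  have bddP: "bdd_above ((\<lambda>\<rho>. Re (mtrace ((1\<^sub>m N - T) * \<rho>))) ` P)"
    by (rule bdd_aboveI[of _ 1]) (use P mt1 qb in force)
  have bddE: "bdd_above ((\<lambda>\<tau>. Re (mtrace (T * \<tau>))) ` E)"
    by (rule bdd_aboveI[of _ 1]) (use E mtT qb in force)
  have a0: "0 \<le> a" unfolding a_def
    by (rule rsup_nonneg[OF _ bddP]) (use P mt1 qb in force)
  have aP: "1 - q \<rho> \<le> a" if "\<rho> \<in> P" for \<rho>
    using le_rsup[OF _ bddP, of "1 - q \<rho>"] mt1 that P unfolding a_def by force
  have qE: "q \<tau> \<le> 1 / M0" if "\<tau> \<in> E" for \<tau>
    using le_rsup[OF _ bddE, of "q \<tau>"] mtT that E TE by force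
  define d where "d = min 1 \<delta>"
  have d: "0 < d" "d \<le> 1" "d \<le> \<delta>" using \<delta> by (auto simp: d_def)
  have M0f: "M0 > 0" "1 / M0 \<le> 1" "0 < 1 / M0" using M by auto
  have dM: "0 < d / M0" using d(1) M0f(1) by simp
  define G where "G = complex_of_real (1 - d) \<cdot>\<^sub>m T + complex_of_real (d / M0) \<cdot>\<^sub>m 1\<^sub>m N"
  have GC: "G \<in> carrier_mat N N" using T(1) by (simp add: G_def)
  have PT: "posq N T" using psd_iff2[OF T(1)] T(2) by simp
  have PT1: "posq N (1\<^sub>m N - T)" using psd_iff2[OF C1] T(3) by simp
  have qfG: "qf N G v = complex_of_real (1 - d) * qf N T v + complex_of_real (d / M0) * qf N (1\<^sub>m N) v" for v
    unfolding G_def using T(1) by (simp add: qf_add qf_smult)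
  have qf1: "qf N (1\<^sub>m N - T) v = qf N (1\<^sub>m N) v - qf N T v" for v
    using T(1) by (simp add: qf_diff)
  have GP: "psd G"
  proof -
    have "posq N G" unfolding posq_def
    proof
      fix v
      have "Im (qf N T v) = 0" "Re (qf N T v) \<ge> 0" using posqD[OF PT] by auto
      moreover have "0 \<le> (\<Sum>i<N. (cmod (v i))\<^sup>2)" by (simp add: sum_nonneg)
      ultimately show "Im (qf N G v) = 0 \<and> Re (qf N G v) \<ge> 0"
        unfolding qfG qf_one using d M0f by simp
    qed
    then show ?thesis using psd_iff2[OF GC] by simp
  qed
  have G1C: "1\<^sub>m N - G \<in> carrier_mat N N" by (rule minus_carrier_mat[OF GC])
  have G1P: "psd (1\<^sub>m N - G)"
  proof -
    have "posq N (1\<^sub>m N - G)" unfolding posq_def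
    proof
      fix v
      define S where "S = (\<Sum>i<N. (cmod (v i))\<^sup>2)"
      have S0: "0 \<le> S" unfolding S_def by (simp add: sum_nonneg)
      have e: "qf N (1\<^sub>m N - G) v = complex_of_real (1 - d) * qf N (1\<^sub>m N - T) v
           + complex_of_real (d * (1 - 1 / M0) * S)"
        using GC qf_diff[of "1\<^sub>m N" N G v] unfolding qfG qf1 qf_one S_def[symmetric]
        by (simp add: algebra_simps)
      have "Im (qf N (1\<^sub>m N - T) v) = 0" "Re (qf N (1\<^sub>m N - T) v) \<ge> 0" using posqD[OF PT1] by auto
      moreover have "0 \<le> d * (1 - 1 / M0) * S" using d M0f S0 by simp
      ultimately show "Im (qf N (1\<^sub>m N - G) v) = 0 \<and> Re (qf N (1\<^sub>m N - G) v) \<ge> 0"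
        unfolding e using d by simp
    qed
    then show ?thesis using psd_iff2[OF G1C] by simp
  qed
  have cp: "cptp N 2 (chan N G)" by (rule chan_cptp[OF N GC GP G1P])
  define Q where "Q = (\<lambda>X. (1 - d) * q X + d / M0)"
  have tpG: "tp N G X = complex_of_real (Q X)" if "X \<in> density_ops N" for X
    unfolding G_def using tp_lin1[OF T(1) one_carrier_mat] qb(1)[OF that] densD(3)[OF that]
    by (simp add: Q_def)
  have tpG1: "tp N (1\<^sub>m N - G) X = 1 - complex_of_real (Q X)" if "X \<in> density_ops N" for X
    using tp_diff1[OF one_carrier_mat GC] tpG[OF that] densD(3)[OF that] by simp
  have chanX: "chan N G X = mat 2 2 (\<lambda>(i,j). if i = 0 \<and> j = 0 then complex_of_real (1 - Q X)
      else if i = 1 \<and> j = 1 then complex_of_real (Q X) else 0)" if "X \<in> density_ops N" for X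
  proof -
    have "complex_of_real (1 - Q X) = 1 - complex_of_real (Q X)" by simp
    then show ?thesis unfolding chan_def tpG[OF that] tpG1[OF that] by (simp only:)
  qed
  have Qb: "0 < Q X" "Q X \<le> 1 / M0 \<or> \<not> X \<in> E" "Q X \<le> 1" if "X \<in> density_ops N" for X
  proof -
    have "0 \<le> (1 - d) * q X" using d qb(2)[OF that] by simp
    then show "0 < Q X" unfolding Q_def using dM by simp
    show "Q X \<le> 1 / M0 \<or> \<not> X \<in> E"
    proof (cases "X \<in> E")
      case True
      have "(1 - d) * q X \<le> (1 - d) * (1 / M0)" using qE[OF True] d by (intro mult_left_mono) auto
      moreover have "(1 - d) * (1 / M0) + d / M0 = 1 / M0" by (simp add: diff_divide_distrib)
      ultimately show ?thesis unfolding Q_def by linarith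
    qed simp
    have "(1 - d) * q X \<le> (1 - d) * 1" using qb(3)[OF that] d by (intro mult_left_mono) auto
    moreover have "d / M0 \<le> d * 1" using d M0f by (simp add: divide_le_eq)
    ultimately show "Q X \<le> 1" unfolding Q_def by (simp add: algebra_simps)
  qed
  define \<epsilon> where "\<epsilon> = min 1 (a + \<delta>)"
  have battery: "chan N G \<tau> \<in> battery_set M0" if "\<tau> \<in> E" for \<tau>
  proof -
    have tD: "\<tau> \<in> density_ops N" using that E by auto
    have Qp: "0 < Q \<tau>" and Qm: "Q \<tau> \<le> 1 / M0" using Qb[OF tD] that by auto
    have "M0 \<le> 1 / Q \<tau>" using Qp Qm M0f by (simp add: le_divide_eq divide_le_eq mult.commute)
    moreover have "chan N G \<tau> = battery_state (1 / Q \<tau>)"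
    proof -
      have "1 / (1 / Q \<tau>) = Q \<tau>" by simp
      then show ?thesis unfolding chanX[OF tD] battery_state_def by (simp only:)
    qed
    ultimately show ?thesis unfolding battery_set_def by blast
  qed
  have tdP: "trace_dist (chan N G \<rho>) ket1bra \<le> \<epsilon>" if "\<rho> \<in> P" for \<rho>
  proof -
    have rD: "\<rho> \<in> density_ops N" using that P by auto
    have "trace_dist (chan N G \<rho>) ket1bra = sqrt ((Re (chan N G \<rho> $$ (0,0)))^2 + (cmod (chan N G \<rho> $$ (0,1)))^2)"
      by (rule td2) (simp_all add: chanX[OF rD])
    also have "\<dots> = 1 - Q \<rho>" using Qb(3)[OF rD] by (simp add: chanX[OF rD])
    finally have e: "trace_dist (chan N G \<rho>) ket1bra = 1 - Q \<rho>" .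
    have "(1 - d) * (1 - q \<rho>) \<le> 1 * (1 - q \<rho>)" using d qb(3)[OF rD] by (intro mult_right_mono) auto
    moreover have "d * (1 - 1 / M0) \<le> d * 1" using d M0f by (intro mult_left_mono) auto
    moreover have "1 - Q \<rho> = (1 - d) * (1 - q \<rho>) + d * (1 - 1 / M0)" unfolding Q_def by (simp add: algebra_simps)
    ultimately have "1 - Q \<rho> \<le> a + \<delta>" using aP[OF that] d lin_aux[of "(1 - d) * (1 - q \<rho>)" "1 - q \<rho>" "d * (1 - 1 / M0)" d "1 - Q \<rho>" a \<delta>] by simp
    then show ?thesis unfolding e \<epsilon>_def using Qb(1)[OF rD] by simp
  qed
  have "\<epsilon> \<in> {0..1}" unfolding \<epsilon>_def using a0 \<delta> by simp
  then have "\<epsilon> \<in> {\<epsilon> \<in> {0..1}. \<exists>F. cptp N 2 F \<and> (\<forall>\<rho>\<in>P. trace_dist (F \<rho>) ket1bra \<le> \<epsilon>) \<and>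
        (\<forall>\<tau>\<in>E. F \<tau> \<in> battery_set M0)}"
    using cp tdP battery by blast
  moreover have "\<epsilon> \<le> a + \<delta>" unfolding \<epsilon>_def by simp
  ultimately show ?thesis unfolding a_def by blast
qed




definition unitm :: "nat \<Rightarrow> nat \<Rightarrow> nat \<Rightarrow> complex mat" where
  "unitm N a b = mat N N (\<lambda>(x,y). if x = a \<and> y = b then 1 else 0)"

definition restr :: "nat \<Rightarrow> (nat \<times> nat) set \<Rightarrow> complex mat \<Rightarrow> complex mat" where
  "restr N S X = mat N N (\<lambda>(x,y). if (x,y) \<in> S then X $$ (x,y) else 0)"

lemma lin_decomp:
  fixes \<phi> :: "complex mat \<Rightarrow> complex"
  assumes lin: "\<And>X Y c. X \<in> carrier_mat N N \<Longrightarrow> Y \<in> carrier_mat N N \<Longrightarrow> \<phi> (c \<cdot>\<^sub>m X + Y) = c * \<phi> X + \<phi> Y"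
    and X: "X \<in> carrier_mat N N"
  shows "\<phi> X = (\<Sum>a<N. \<Sum>b<N. X $$ (a,b) * \<phi> (unitm N a b))"
proof -
  have Z: "0\<^sub>m N N \<in> carrier_mat N N" by simp
  have "\<phi> (1 \<cdot>\<^sub>m 0\<^sub>m N N + 0\<^sub>m N N) = 1 * \<phi> (0\<^sub>m N N) + \<phi> (0\<^sub>m N N)" by (rule lin[OF Z Z])
  moreover have "(1::complex) \<cdot>\<^sub>m 0\<^sub>m N N + 0\<^sub>m N N = 0\<^sub>m N N" by (rule eq_matI) auto
  ultimately have phi0: "\<phi> (0\<^sub>m N N) = 0" by simp
  have ind: "finite S \<Longrightarrow> S \<subseteq> {..<N} \<times> {..<N} \<Longrightarrow>
     \<phi> (restr N S X) = (\<Sum>p\<in>S. X $$ p * \<phi> (unitm N (fst p) (snd p)))" for S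
  proof (induction S rule: finite_induct)
    case empty
    have "restr N {} X = 0\<^sub>m N N" by (rule eq_matI) (auto simp: restr_def)
    then show ?case using phi0 by simp
  next
    case (insert p S)
    have e: "restr N (insert p S) X = X $$ p \<cdot>\<^sub>m unitm N (fst p) (snd p) + restr N S X"
      by (rule eq_matI) (use insert.hyps in \<open>auto simp: restr_def unitm_def\<close>)
    have "\<phi> (restr N (insert p S) X) = X $$ p * \<phi> (unitm N (fst p) (snd p)) + \<phi> (restr N S X)"
      unfolding e by (rule lin) (auto simp: unitm_def restr_def)
    then show ?case using insert by simp
  qed
  have full: "restr N ({..<N} \<times> {..<N}) X = X"
    by (rule eq_matI) (use X in \<open>auto simp: restr_def\<close>)
  have "\<phi> X = (\<Sum>p\<in>{..<N} \<times> {..<N}. X $$ p * \<phi> (unitm N (fst p) (snd p)))"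
    using ind[of "{..<N} \<times> {..<N}"] full by simp
  also have "\<dots> = (\<Sum>a<N. \<Sum>b<N. X $$ (a,b) * \<phi> (unitm N a b))"
    by (simp add: sum.cartesian_product case_prod_beta)
  finally show ?thesis .
qed

lemma id_tensor_1:
  assumes X: "X \<in> carrier_mat N N" and FX: "F X \<in> carrier_mat 2 2"
  shows "id_tensor 1 N 2 F X = F X"
proof -
  have b: "block N X 0 0 = X" by (rule eq_matI) (use X in \<open>auto simp: block_def\<close>)
  show ?thesis
    by (rule eq_matI) (use FX in \<open>auto simp: id_tensor_def b\<close>)
qed


lemma psd_rank1: "psd (mat N N (\<lambda>(x,y). v x * cnj (v y)))"
proof -
  let ?W = "mat N N (\<lambda>(x,y). v x * cnj (v y))"
  have WC: "?W \<in> carrier_mat N N" by simp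
  have "posq N ?W" unfolding posq_def
  proof
    fix u
    define g where "g = (\<Sum>x<N. cnj (u x) * v x)"
    have "qf N ?W u = (\<Sum>x<N. \<Sum>y<N. (cnj (u x) * v x) * (cnj (v y) * u y))"
      unfolding qf_def by (intro sum.cong refl) (simp add: ac_simps)
    also have "\<dots> = g * cnj g" unfolding g_def cnj_sum sum_product by (intro sum.cong refl) (simp add: ac_simps)
    also have "\<dots> = complex_of_real ((cmod g)^2)" by (simp only: complex_norm_square)
    finally show "Im (qf N ?W u) = 0 \<and> Re (qf N ?W u) \<ge> 0" by simp
  qed
  then show ?thesis using psd_iff2[OF WC] by simp
qed

lemma partA:
  assumes N: "N > 0" and M: "M0 > 0"
    and P: "P \<subseteq> density_ops N" and E: "E \<subseteq> density_ops N"
    and F: "cptp N 2 F" and tdP: "\<forall>\<rho>\<in>P. trace_dist (F \<rho>) ket1bra \<le> \<epsilon>" and e0: "0 \<le> \<epsilon>"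
    and bat: "\<forall>\<tau>\<in>E. F \<tau> \<in> battery_set M0"
  shows "\<exists>T. T \<in> carrier_mat N N \<and> psd T \<and> psd (1\<^sub>m N - T) \<and>
     rsup ((\<lambda>\<tau>. Re (mtrace (T * \<tau>))) ` E) \<le> 1 / M0 \<and>
     rsup ((\<lambda>\<rho>. Re (mtrace ((1\<^sub>m N - T) * \<rho>))) ` P) \<le> \<epsilon>"
proof -
  have FC: "F X \<in> carrier_mat 2 2" if "X \<in> carrier_mat N N" for X using F that unfolding cptp_def by blast
  have Flin: "F (c \<cdot>\<^sub>m X + Y) = c \<cdot>\<^sub>m F X + F Y" if "X \<in> carrier_mat N N" "Y \<in> carrier_mat N N" for X Y c
    using F that unfolding cptp_def by blast
  have Ftr: "mtrace (F X) = mtrace X" if "X \<in> carrier_mat N N" for X using F that unfolding cptp_def by blast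
  have Fcp: "psd (id_tensor 1 N 2 F X)" if "X \<in> carrier_mat N N" "psd X" for X
  proof -
    have "X \<in> carrier_mat (1*N) (1*N)" using that by simp
    then show ?thesis using F that(2) unfolding cptp_def by blast
  qed
  have Fpos: "psd (F X)" if "X \<in> carrier_mat N N" "psd X" for X
    using Fcp[OF that] id_tensor_1[of X N F, OF that(1) FC[OF that(1)]] by simp
  define \<phi> where "\<phi> = (\<lambda>X. F X $$ (1,1))"
  have philin: "\<phi> (c \<cdot>\<^sub>m X + Y) = c * \<phi> X + \<phi> Y" if "X \<in> carrier_mat N N" "Y \<in> carrier_mat N N" for X Y c
    unfolding \<phi>_def Flin[OF that] using FC[OF that(1)] FC[OF that(2)] by simp
  have dec: "\<phi> X = (\<Sum>a<N. \<Sum>b<N. X $$ (a,b) * \<phi> (unitm N a b))" if "X \<in> carrier_mat N N" for X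
    by (rule lin_decomp[OF philin that])
  define T where "T = mat N N (\<lambda>(a,b). \<phi> (unitm N b a))"
  have TC: "T \<in> carrier_mat N N" by (simp add: T_def)
  have tpT: "tp N T X = \<phi> X" if "X \<in> carrier_mat N N" for X
  proof -
    have "tp N T X = (\<Sum>i<N. \<Sum>j<N. X $$ (j,i) * \<phi> (unitm N j i))"
      unfolding tp_def T_def by (intro sum.cong refl) (simp add: mult.commute)
    also have "\<dots> = (\<Sum>j<N. \<Sum>i<N. X $$ (j,i) * \<phi> (unitm N j i))" by (rule sum.swap)
    also have "\<dots> = \<phi> X" using dec[OF that] by simp
    finally show ?thesis .
  qed
  have diag_pos: "Im (\<sigma> $$ (i,i)) = 0 \<and> Re (\<sigma> $$ (i,i)) \<ge> 0" if "\<sigma> \<in> carrier_mat 2 2" "psd \<sigma>" "i < 2" for \<sigma> i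
  proof -
    have PQ: "posq 2 \<sigma>" using psd_iff2[OF that(1)] that(2) by simp
    have "qf 2 \<sigma> (\<lambda>j. if j = i then 1 else 0) = \<sigma> $$ (i,i)" using qf_unit[OF that(3), of \<sigma> 1] by simp
    then show ?thesis using posqD[OF PQ, of "\<lambda>j. if j = i then 1 else 0"] by simp
  qed
  have qfT: "qf N T v = \<phi> (mat N N (\<lambda>(x,y). v x * cnj (v y)))" for v
  proof -
    have "qf N T v = (\<Sum>i<N. \<Sum>j<N. v j * cnj (v i) * \<phi> (unitm N j i))"
      unfolding qf_def T_def by (intro sum.cong refl) (simp add: ac_simps)
    also have "\<dots> = (\<Sum>j<N. \<Sum>i<N. v j * cnj (v i) * \<phi> (unitm N j i))" by (rule sum.swap)
    also have "\<dots> = \<phi> (mat N N (\<lambda>(x,y). v x * cnj (v y)))"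
      using dec[of "mat N N (\<lambda>(x,y). v x * cnj (v y))"] by simp
    finally show ?thesis .
  qed
  have TP: "psd T"
  proof -
    have "posq N T" unfolding posq_def
    proof
      fix v
      let ?W = "mat N N (\<lambda>(x,y). v x * cnj (v y))"
      have WC: "?W \<in> carrier_mat N N" by simp
      have "Im (F ?W $$ (1,1)) = 0 \<and> Re (F ?W $$ (1,1)) \<ge> 0"
        by (rule diag_pos[OF FC[OF WC] Fpos[OF WC psd_rank1]]) simp
      then show "Im (qf N T v) = 0 \<and> Re (qf N T v) \<ge> 0" unfolding qfT \<phi>_def .
    qed
    then show ?thesis using psd_iff2[OF TC] by simp
  qed
  have T1C: "1\<^sub>m N - T \<in> carrier_mat N N" by (rule minus_carrier_mat[OF TC])
  have T1P: "psd (1\<^sub>m N - T)"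
  proof -
    have "posq N (1\<^sub>m N - T)" unfolding posq_def
    proof
      fix v
      let ?W = "mat N N (\<lambda>(x,y). v x * cnj (v y))"
      have WC: "?W \<in> carrier_mat N N" by simp
      have FWC: "F ?W \<in> carrier_mat 2 2" by (rule FC[OF WC])
      have "mtrace (F ?W) = F ?W $$ (0,0) + F ?W $$ (1,1)"
        using FWC by (simp add: mtrace_def numeral_2_eq_2)
      moreover have "mtrace ?W = qf N (1\<^sub>m N) v"
        unfolding mtrace_def qf_one of_real_sum complex_norm_square by simp
      ultimately have "qf N (1\<^sub>m N - T) v = F ?W $$ (0,0)"
        using Ftr[OF WC] qf_diff[OF one_carrier_mat TC, of v] qfT[of v] unfolding \<phi>_def by simp
      moreover have "Im (F ?W $$ (0,0)) = 0 \<and> Re (F ?W $$ (0,0)) \<ge> 0"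
        by (rule diag_pos[OF FWC Fpos[OF WC psd_rank1]]) simp
      ultimately show "Im (qf N (1\<^sub>m N - T) v) = 0 \<and> Re (qf N (1\<^sub>m N - T) v) \<ge> 0" by simp
    qed
    then show ?thesis using psd_iff2[OF T1C] by simp
  qed
  have rE: "rsup ((\<lambda>\<tau>. Re (mtrace (T * \<tau>))) ` E) \<le> 1 / M0"
  proof (rule rsup_le)
    show "0 \<le> 1 / M0" using M by simp
    show "\<forall>x\<in>(\<lambda>\<tau>. Re (mtrace (T * \<tau>))) ` E. x \<le> 1 / M0"
    proof
      fix x assume "x \<in> (\<lambda>\<tau>. Re (mtrace (T * \<tau>))) ` E"
      then obtain \<tau> where t: "\<tau> \<in> E" and x: "x = Re (mtrace (T * \<tau>))" by blast
      have tC: "\<tau> \<in> carrier_mat N N" using t E densD(1) by blast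
      obtain M' where M': "M' \<ge> M0" "F \<tau> = battery_state M'" using bat t unfolding battery_set_def by blast
      have "x = Re (\<phi> \<tau>)" using x mtrace_mult[OF TC tC] tpT[OF tC] by simp
      also have "\<dots> = 1 / M'" unfolding \<phi>_def M'(2) battery_state_def by simp
      also have "\<dots> \<le> 1 / M0" using M M' by (simp add: frac_le)
      finally show "x \<le> 1 / M0" .
    qed
  qed
  have rP: "rsup ((\<lambda>\<rho>. Re (mtrace ((1\<^sub>m N - T) * \<rho>))) ` P) \<le> \<epsilon>"
  proof (rule rsup_le[OF _ e0])
    show "\<forall>x\<in>(\<lambda>\<rho>. Re (mtrace ((1\<^sub>m N - T) * \<rho>))) ` P. x \<le> \<epsilon>"
    proof
      fix x assume "x \<in> (\<lambda>\<rho>. Re (mtrace ((1\<^sub>m N - T) * \<rho>))) ` P"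
      then obtain \<rho> where r: "\<rho> \<in> P" and x: "x = Re (mtrace ((1\<^sub>m N - T) * \<rho>))" by blast
      have rD: "\<rho> \<in> density_ops N" using r P by blast
      note rC = densD(1)[OF rD]
      define \<sigma> where "\<sigma> = F \<rho>"
      have sC: "\<sigma> \<in> carrier_mat 2 2" unfolding \<sigma>_def by (rule FC[OF rC])
      have sP: "psd \<sigma>" unfolding \<sigma>_def by (rule Fpos[OF rC densD(2)[OF rD]])
      have H: "herm 2 \<sigma>" using psd_iff[OF sC] sP by blast
      have h10: "\<sigma> $$ (1,0) = cnj (\<sigma> $$ (0,1))" using H[unfolded herm_def, rule_format, of 0 1] by simp
      have d0: "Im (\<sigma> $$ (0,0)) = 0" using diag_pos[OF sC sP, of 0] by simp
      have "mtrace \<sigma> = 1" unfolding \<sigma>_def Ftr[OF rC] using rD by (simp add: density_ops_def)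
      then have tr: "\<sigma> $$ (0,0) + \<sigma> $$ (1,1) = 1" using sC by (simp add: mtrace_def numeral_2_eq_2)
      have "x = Re (tp N (1\<^sub>m N - T) \<rho>)" using x mtrace_mult[OF T1C rC] by simp
      also have "\<dots> = Re (tp N (1\<^sub>m N) \<rho> - tp N T \<rho>)" using tp_diff1[OF one_carrier_mat TC] by simp
      also have "\<dots> = 1 - Re (\<sigma> $$ (1,1))" using densD(3)[OF rD] tpT[OF rC] unfolding \<phi>_def \<sigma>_def by simp
      also have "\<dots> = Re (\<sigma> $$ (0,0))" using arg_cong[OF tr, of Re] by simp
      also have "\<dots> \<le> sqrt ((Re (\<sigma> $$ (0,0)))^2 + (cmod (\<sigma> $$ (0,1)))^2)"
        by (rule real_le_rsqrt) simp
      also have "\<dots> = trace_dist \<sigma> ket1bra" by (rule td2[OF sC h10 d0 tr, symmetric])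
      also have "\<dots> \<le> \<epsilon>" using tdP r unfolding \<sigma>_def by blast
      finally show "x \<le> \<epsilon>" .
    qed
  qed
  show ?thesis using TC TP T1P rE rP by blast
qed


lemma zero_test:
  shows "0\<^sub>m N N \<in> carrier_mat N N" "psd (0\<^sub>m N N)" "psd (1\<^sub>m N - 0\<^sub>m N N)"
    "\<And>X. X \<in> carrier_mat N N \<Longrightarrow> mtrace (0\<^sub>m N N * X) = 0"
proof -
  show C: "0\<^sub>m N N \<in> carrier_mat N N" by simp
  have "posq N (0\<^sub>m N N)" unfolding posq_def qf_def by simp
  then show "psd (0\<^sub>m N N)" using psd_iff2[OF C] by simp
  have e: "1\<^sub>m N - 0\<^sub>m N N = (1\<^sub>m N :: complex mat)" by (rule eq_matI) auto
  have "posq N (1\<^sub>m N)" unfolding posq_def qf_one by (simp add: sum_nonneg)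
  then show "psd (1\<^sub>m N - 0\<^sub>m N N)" unfolding e using psd_iff2[OF one_carrier_mat] by simp
  fix X :: "complex mat" assume X: "X \<in> carrier_mat N N"
  show "mtrace (0\<^sub>m N N * X) = 0" unfolding mtrace_mult[OF C X] tp_def by simp
qed

theorem propositionS5:
  fixes d n :: nat and r :: real and P E :: "complex mat set"
  assumes "d \<ge> 1"
    and "P \<subseteq> density_ops (d ^ n)"
    and "E \<subseteq> density_ops (d ^ n)"
    and "r > 0"
  shows "zeta_GPO (d ^ n) n r P E = alpha_err (d ^ n) n r P E"
proof -
  define N where "N = d ^ n"
  have N: "N > 0" using assms(1) by (simp add: N_def)
  have P: "P \<subseteq> density_ops N" and E: "E \<subseteq> density_ops N" using assms(2,3) by (simp_all add: N_def)
  define M0 where "M0 = 2 powr (real n * r)"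
  have M0: "M0 \<ge> 1" unfolding M0_def using assms(4) by (intro ge_one_powr_ge_zero) auto
  have c: "2 powr (- (real n * r)) = 1 / M0" unfolding M0_def by (rule powr_minus_divide)
  define Z where "Z = {\<epsilon> \<in> {0..1}. \<exists>F. cptp N 2 F \<and> (\<forall>\<rho>\<in>P. trace_dist (F \<rho>) ket1bra \<le> \<epsilon>) \<and>
      (\<forall>\<tau>\<in>E. F \<tau> \<in> battery_set M0)}"
  define A where "A = {rsup ((\<lambda>\<rho>. Re (mtrace ((1\<^sub>m N - T) * \<rho>))) ` P) | T.
      T \<in> carrier_mat N N \<and> psd T \<and> psd (1\<^sub>m N - T) \<and>
      rsup ((\<lambda>\<tau>. Re (mtrace (T * \<tau>))) ` E) \<le> 1 / M0}"
  have zeta: "zeta_GPO (d ^ n) n r P E = Inf Z" unfolding zeta_GPO_def Z_def N_def M0_def ..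
  have alpha: "alpha_err (d ^ n) n r P E = Inf A" unfolding alpha_err_def A_def N_def c ..
  have rE0: "rsup ((\<lambda>\<tau>. Re (mtrace (0\<^sub>m N N * \<tau>))) ` E) \<le> 1 / M0"
    by (rule rsup_le) (use M0 zero_test(4) E densD(1) in force)+
  have Ane: "A \<noteq> {}" unfolding A_def using zero_test(1,2,3) rE0 by blast
  have Zbdd: "bdd_below Z" unfolding Z_def by (rule bdd_belowI[of _ 0]) auto
  have Abdd: "bdd_below A"
  proof (rule bdd_belowI[of _ 0])
    fix x assume "x \<in> A"
    then obtain T where x: "x = rsup ((\<lambda>\<rho>. Re (mtrace ((1\<^sub>m N - T) * \<rho>))) ` P)"
      and T: "T \<in> carrier_mat N N" "psd T" "psd (1\<^sub>m N - T)" unfolding A_def by blast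
    have C1: "1\<^sub>m N - T \<in> carrier_mat N N" by (rule minus_carrier_mat[OF T(1)])
    have v: "Re (mtrace ((1\<^sub>m N - T) * \<rho>)) = 1 - Re (tp N T \<rho>)" if "\<rho> \<in> P" for \<rho>
    proof -
      have rD: "\<rho> \<in> density_ops N" using that P by blast
      show ?thesis using mtrace_mult[OF C1 densD(1)[OF rD]] test_bounds(4)[OF T rD] by simp
    qed
    have b: "0 \<le> 1 - Re (tp N T \<rho>)" "1 - Re (tp N T \<rho>) \<le> 1" if "\<rho> \<in> P" for \<rho>
      using test_bounds(2,3)[OF T, of \<rho>] that P by auto
    show "0 \<le> x" unfolding x
    proof (rule rsup_nonneg)
      show "\<forall>x\<in>(\<lambda>\<rho>. Re (mtrace ((1\<^sub>m N - T) * \<rho>))) ` P. 0 \<le> x" using v b by auto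
      show "bdd_above ((\<lambda>\<rho>. Re (mtrace ((1\<^sub>m N - T) * \<rho>))) ` P)"
        by (rule bdd_aboveI[of _ 1]) (use v b in auto)
    qed
  qed
  obtain \<epsilon>0 where "\<epsilon>0 \<in> Z"
    using partB[OF N M0 P E zero_test(1,2,3) rE0, of 1] unfolding Z_def by auto
  then have Zne: "Z \<noteq> {}" by blast
  have le1: "Inf Z \<le> Inf A"
  proof (rule cInf_greatest[OF Ane])
    fix a assume "a \<in> A"
    then obtain T where a: "a = rsup ((\<lambda>\<rho>. Re (mtrace ((1\<^sub>m N - T) * \<rho>))) ` P)"
      and T: "T \<in> carrier_mat N N" "psd T" "psd (1\<^sub>m N - T)"
        "rsup ((\<lambda>\<tau>. Re (mtrace (T * \<tau>))) ` E) \<le> 1 / M0" unfolding A_def by blast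
    show "Inf Z \<le> a"
    proof (rule field_le_epsilon)
      fix \<delta> :: real assume \<delta>: "0 < \<delta>"
      obtain \<epsilon> where e: "\<epsilon> \<in> Z" "\<epsilon> \<le> a + \<delta>"
        using partB[OF N M0 P E T \<delta>] unfolding Z_def a by blast
      have "Inf Z \<le> \<epsilon>" by (rule cInf_lower[OF e(1) Zbdd])
      then show "Inf Z \<le> a + \<delta>" using e(2) by simp
    qed
  qed
  have le2: "Inf A \<le> Inf Z"
  proof (rule cInf_greatest[OF Zne])
    fix \<epsilon> assume "\<epsilon> \<in> Z"
    then obtain F where e0: "0 \<le> \<epsilon>" and F: "cptp N 2 F" "\<forall>\<rho>\<in>P. trace_dist (F \<rho>) ket1bra \<le> \<epsilon>"
      "\<forall>\<tau>\<in>E. F \<tau> \<in> battery_set M0" unfolding Z_def by auto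
    have M0p: "M0 > 0" using M0 by simp
    obtain T where T: "T \<in> carrier_mat N N" "psd T" "psd (1\<^sub>m N - T)"
      "rsup ((\<lambda>\<tau>. Re (mtrace (T * \<tau>))) ` E) \<le> 1 / M0"
      "rsup ((\<lambda>\<rho>. Re (mtrace ((1\<^sub>m N - T) * \<rho>))) ` P) \<le> \<epsilon>"
      using partA[OF N M0p P E F(1,2) e0 F(3)] by blast
    have "rsup ((\<lambda>\<rho>. Re (mtrace ((1\<^sub>m N - T) * \<rho>))) ` P) \<in> A"
      unfolding A_def using T(1-4) by blast
    then have "Inf A \<le> rsup ((\<lambda>\<rho>. Re (mtrace ((1\<^sub>m N - T) * \<rho>))) ` P)"
      by (rule cInf_lower[OF _ Abdd])
    then show "Inf A \<le> \<epsilon>" using T(5) by simp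
  qed
  show ?thesis unfolding zeta alpha using le1 le2 by simp
qed


end
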